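(* Let $\sim$ be an equivalence relation on $\mathbb{N}$ such that every equivalence class is finite, $\sim$ is computable, and there is an algorithm that given $x$ lists the equivalence class of $x$. Let $0<\gamma<1$. Then there exist an infinite binary sequence $\omega$ that follows $\sim$ and an integer $N$ such that for every finite set $A\subset\mathbb{N}$ with $\#_f A\ge N$ there exists $t\in A$ with $$K(\omega(A)\mid t)\ \ge\ \gamma\cdot\#_f A-K(A\mid t)-\log m(t).$$
   Context: $K(\cdot\mid\cdot)$ denotes conditional prefix Kolmogorov complexity (finite sets, numbers and strings encoded computably); $\log$ is base 2. A binary sequence $\omega$ follows $\sim$ if $\omega_i=\omega_j$ whenever $i\sim j$. For a finite $A\subset\mathbb{N}$, $\omega(A)$ is the binary string of length $\#A$ formed by the bits $\omega_i$, $i\in A$, in increasing order of $i$; $\#_f A$ (the number of free bits in $A$) is the number of equivalence classes of $\sim$ that intersect $A$; and $m(t)$ is the number of elements of the equivalence class of $t$. *)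

theory Defs
  imports Complex_Main "HOL-Library.Nat_Bijection"
begin

datatype recf = Z | S | Id nat | Cn recf "recf list" | Pr recf recf | Mn recf

text \<open>Relational (partial) semantics: eval f xs y means f on arguments xs halts with value y.\<close>
inductive eval :: "recf \<Rightarrow> nat list \<Rightarrow> nat \<Rightarrow> bool" where
  eval_Z: "eval Z xs 0"
| eval_S: "eval S (x # xs) (Suc x)"
| eval_Id: "i < length xs \<Longrightarrow> eval (Id i) xs (xs ! i)"
| eval_Cn: "list_all2 (\<lambda>g y. eval g xs y) gs ys \<Longrightarrow> eval f ys z \<Longrightarrow> eval (Cn f gs) xs z"
| eval_Pr0: "eval f xs z \<Longrightarrow> eval (Pr f g) (0 # xs) z"
| eval_PrS: "eval (Pr f g) (n # xs) r \<Longrightarrow> eval g (n # r # xs) z \<Longrightarrow> eval (Pr f g) (Suc n # xs) z"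
| eval_Mn: "eval f (y # xs) 0 \<Longrightarrow> (\<forall>z<y. \<exists>v>0. eval f (z # xs) v) \<Longrightarrow> eval (Mn f) xs y"

definition computable1 :: "(nat \<Rightarrow> nat) \<Rightarrow> bool" where
  "computable1 f \<longleftrightarrow> (\<exists>r. \<forall>x. eval r [x] (f x))"

definition decidable_rel :: "(nat \<Rightarrow> nat \<Rightarrow> bool) \<Rightarrow> bool" where
  "decidable_rel R \<longleftrightarrow> (\<exists>r. \<forall>x y. eval r [x, y] (if R x y then 1 else 0))"

text \<open>Computable bijection between binary strings and natural numbers.\<close>
fun bl_to_nat :: "bool list \<Rightarrow> nat" where
  "bl_to_nat [] = 0"
| "bl_to_nat (b # bs) = 2 * bl_to_nat bs + (if b then 2 else 1)"

text \<open>Finite sets of naturals are encoded by set_encode (HOL-Library.Nat_Bijection).\<close>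

text \<open>A conditional machine maps a program p and a condition y to an output (all objects
  encoded as natural numbers).\<close>
type_synonym machine = "bool list \<Rightarrow> nat \<Rightarrow> nat option"

definition prefix_machine :: "machine \<Rightarrow> bool" where
  "prefix_machine M \<longleftrightarrow>
     (\<exists>r. \<forall>p y z. eval r [bl_to_nat p, y] z \<longleftrightarrow> M p y = Some z) \<and>
     (\<forall>y p q. M p y \<noteq> None \<and> M q y \<noteq> None \<and> (\<exists>zs. q = p @ zs) \<longrightarrow> p = q)"

definition optimal_prefix_machine :: "machine \<Rightarrow> bool" where
  "optimal_prefix_machine U \<longleftrightarrow> prefix_machine U \<and>
     (\<forall>M. prefix_machine M \<longrightarrow>
        (\<exists>c. \<forall>p y x. M p y = Some x \<longrightarrow> (\<exists>q. U q y = Some x \<and> length q \<le> length p + c)))"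

definition KC :: "machine \<Rightarrow> nat \<Rightarrow> nat \<Rightarrow> nat" where
  "KC U x y = (LEAST n. \<exists>p. length p = n \<and> U p y = Some x)"

definition follows :: "(nat \<Rightarrow> nat \<Rightarrow> bool) \<Rightarrow> (nat \<Rightarrow> bool) \<Rightarrow> bool" where
  "follows R \<omega> \<longleftrightarrow> (\<forall>i j. R i j \<longrightarrow> \<omega> i = \<omega> j)"

definition restrict_seq :: "(nat \<Rightarrow> bool) \<Rightarrow> nat set \<Rightarrow> bool list" where
  "restrict_seq \<omega> A = map \<omega> (sorted_list_of_set A)"

definition eq_class :: "(nat \<Rightarrow> nat \<Rightarrow> bool) \<Rightarrow> nat \<Rightarrow> nat set" where
  "eq_class R x = {y. R x y}"

definition free_bits :: "(nat \<Rightarrow> nat \<Rightarrow> bool) \<Rightarrow> nat set \<Rightarrow> nat" where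
  "free_bits R A = card {C \<in> range (eq_class R). C \<inter> A \<noteq> {}}"

definition class_size :: "(nat \<Rightarrow> nat \<Rightarrow> bool) \<Rightarrow> nat \<Rightarrow> nat" where
  "class_size R t = card (eq_class R t)"

end

theory Submission
  imports Defs "HOL-Probability.Product_PMF"
begin


fun Kc :: "nat \<Rightarrow> recf" where
  "Kc 0 = Z" | "Kc (Suc n) = Cn S [Kc n]"

lemma eval_Kc: "eval (Kc n) [w] z \<longleftrightarrow> z = n"
proof (induction n arbitrary: z)
  case 0 then show ?case by (auto elim: eval.cases intro: eval.intros)
next
  case (Suc n)
  show ?case
  proof
    assume "eval (Kc (Suc n)) [w] z"
    then obtain ys where "list_all2 (\<lambda>g y. eval g [w] y) [Kc n] ys" "eval S ys z"
      by (auto elim: eval.cases)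
    then show "z = Suc n" using Suc by (auto elim: eval.cases simp: list_all2_Cons1)
  next
    assume "z = Suc n"
    then show "eval (Kc (Suc n)) [w] z" using Suc
      by (auto intro!: eval.intros(4)[where ys="[n]"] eval.intros)
  qed
qed

lemma eval_Mn_Id1: "eval (Mn (Id 1)) [v, y] w \<longleftrightarrow> v = 0 \<and> w = 0"
proof
  assume "eval (Mn (Id 1)) [v, y] w"
  then have h1: "eval (Id 1) (w # [v,y]) 0" and h2: "\<forall>z<w. \<exists>u>0. eval (Id 1) (z # [v,y]) u"
    by (auto elim: eval.cases)
  from h1 have "v = 0" by (auto elim: eval.cases)
  moreover have "w = 0"
  proof (rule ccontr)
    assume "w \<noteq> 0"
    with h2 obtain u where "u > 0" "eval (Id 1) (0 # [v,y]) u" by auto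
    then show False using \<open>v = 0\<close> by (auto elim: eval.cases)
  qed
  ultimately show "v = 0 \<and> w = 0" by simp
next
  assume "v = 0 \<and> w = 0"
  then show "eval (Mn (Id 1)) [v, y] w"
    using eval_Id[of 1 "[0, 0, y]"] by (auto intro!: eval_Mn)
qed

lemma eval_const_machine: "eval (Cn (Kc x) [Mn (Id 1)]) [v, y] z \<longleftrightarrow> v = 0 \<and> z = x"
proof
  assume "eval (Cn (Kc x) [Mn (Id 1)]) [v, y] z"
  then obtain ys where "list_all2 (\<lambda>g y'. eval g [v, y] y') [Mn (Id 1)] ys" "eval (Kc x) ys z"
    by (auto elim: eval.cases)
  then obtain w where "eval (Mn (Id 1)) [v, y] w" "eval (Kc x) [w] z"
    by (auto simp: list_all2_Cons1)
  then show "v = 0 \<and> z = x" using eval_Mn_Id1 eval_Kc by metis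
next
  assume "v = 0 \<and> z = x"
  then show "eval (Cn (Kc x) [Mn (Id 1)]) [v, y] z"
    using eval_Mn_Id1[of 0 y 0] eval_Kc[of x 0 x]
    by (auto intro!: eval_Cn[where ys="[0]"])
qed

lemma bl_to_nat_0: "bl_to_nat p = 0 \<longleftrightarrow> p = []"
  by (cases p) auto

lemma bl_to_nat_inj: "inj bl_to_nat"
proof -
  have "\<forall>q. bl_to_nat p = bl_to_nat q \<longrightarrow> p = q" for p
  proof (induction p)
    case Nil then show ?case using bl_to_nat_0 by metis
  next
    case (Cons b bs)
    show ?case
    proof (intro allI impI)
      fix q assume h: "bl_to_nat (b # bs) = bl_to_nat q"
      then obtain c cs where q: "q = c # cs" by (cases q) (auto split: if_splits)
      from h q have "b = c" by (auto split: if_splits; presburger)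
      with h q have "bl_to_nat bs = bl_to_nat cs" by auto
      with Cons q \<open>b = c\<close> show "b # bs = q" by auto
    qed
  qed
  then show ?thesis by (auto simp: inj_def)
qed

lemma U_total:
  assumes "optimal_prefix_machine U"
  shows "\<exists>p. U p y = Some x"
proof -
  define M :: machine where "M = (\<lambda>p y. if p = [] then Some x else None)"
  have "prefix_machine M"
    unfolding prefix_machine_def
  proof
    show "\<exists>r. \<forall>p y z. eval r [bl_to_nat p, y] z = (M p y = Some z)"
      by (rule exI[of _ "Cn (Kc x) [Mn (Id 1)]"], intro allI, subst eval_const_machine) (auto simp: M_def bl_to_nat_0)
    show "\<forall>y p q. M p y \<noteq> None \<and> M q y \<noteq> None \<and> (\<exists>zs. q = p @ zs) \<longrightarrow> p = q"
      by (simp add: M_def)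
  qed
  note pm = this
  have "\<forall>M. prefix_machine M \<longrightarrow>
        (\<exists>c. \<forall>p y x. M p y = Some x \<longrightarrow> (\<exists>q. U q y = Some x \<and> length q \<le> length p + c))"
    using assms unfolding optimal_prefix_machine_def by (rule conjunct2)
  from this[rule_format, OF pm] obtain c where
    "\<forall>p y x'. M p y = Some x' \<longrightarrow> (\<exists>q. U q y = Some x' \<and> length q \<le> length p + c)"
    by blast
  moreover have "M [] y = Some x" by (simp add: M_def)
  ultimately show ?thesis by (meson)
qed

lemma KC_witness:
  assumes "optimal_prefix_machine U"
  shows "\<exists>p. length p = KC U x y \<and> U p y = Some x"
proof -
  obtain p where "U p y = Some x" using U_total[OF assms] by blast
  then have "\<exists>n. \<exists>p. length p = n \<and> U p y = Some x" by blast
  from LeastI_ex[OF this] show ?thesis unfolding KC_def .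
qed


definition pfree :: "bool list set \<Rightarrow> bool" where
  "pfree P \<longleftrightarrow> (\<forall>p\<in>P. \<forall>q\<in>P. (\<exists>zs. q = p @ zs) \<longrightarrow> p = q)"

lemma kraft_aux:
  "finite P \<Longrightarrow> pfree P \<Longrightarrow> (\<forall>p\<in>P. length p \<le> n) \<Longrightarrow> (\<Sum>p\<in>P. (1/2::real) ^ length p) \<le> 1"
proof (induction n arbitrary: P)
  case 0
  then have "P \<subseteq> {[]}" by auto
  then have "P = {} \<or> P = {[]}" by auto
  then show ?case by auto
next
  case (Suc n)
  show ?case
  proof (cases "[] \<in> P")
    case True
    have "\<forall>q\<in>P. q = []"
    proof
      fix q assume "q \<in> P"
      moreover have "q = [] @ q" by simp
      ultimately show "q = []" using Suc.prems(2) True unfolding pfree_def by metis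
    qed
    then have "P = {[]}" using True by blast
    then show ?thesis by simp
  next
    case False
    define P1 where "P1 = {bs. True # bs \<in> P}"
    define P0 where "P0 = {bs. False # bs \<in> P}"
    have P: "P = Cons True ` P1 \<union> Cons False ` P0"
    proof (rule set_eqI)
      fix p
      show "p \<in> P \<longleftrightarrow> p \<in> Cons True ` P1 \<union> Cons False ` P0"
      proof (cases p)
        case Nil
        then show ?thesis using False by (simp add: image_iff)
      next
        case (Cons b bs)
        show ?thesis
        proof (cases b)
          case True
          then show ?thesis using Cons by (simp add: P1_def image_iff)
        next
          case False
          then show ?thesis using Cons by (simp add: P0_def image_iff)
        qed
      qed
    qed
    have "Cons True ` P1 \<subseteq> P" by (auto simp: P1_def)
    then have "finite (Cons True ` P1)" using Suc.prems(1) by (rule finite_subset)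
    then have fin1: "finite P1" by (rule finite_imageD) (simp add: inj_on_def)
    have "Cons False ` P0 \<subseteq> P" by (auto simp: P0_def)
    then have "finite (Cons False ` P0)" using Suc.prems(1) by (rule finite_subset)
    then have fin0: "finite P0" by (rule finite_imageD) (simp add: inj_on_def)
    have pf1: "pfree P1" unfolding pfree_def
    proof (intro ballI impI)
      fix p q assume "p \<in> P1" "q \<in> P1" "\<exists>zs. q = p @ zs"
      then obtain zs where "q = p @ zs" by blast
      then have "True # q = (True # p) @ zs" by simp
      moreover have "True # p \<in> P" "True # q \<in> P" using \<open>p \<in> P1\<close> \<open>q \<in> P1\<close> by (auto simp: P1_def)
      ultimately have "True # p = True # q" using Suc.prems(2) unfolding pfree_def by blast
      then show "p = q" by simp
    qed
    have pf0: "pfree P0" unfolding pfree_def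
    proof (intro ballI impI)
      fix p q assume "p \<in> P0" "q \<in> P0" "\<exists>zs. q = p @ zs"
      then obtain zs where "q = p @ zs" by blast
      then have "False # q = (False # p) @ zs" by simp
      moreover have "False # p \<in> P" "False # q \<in> P" using \<open>p \<in> P0\<close> \<open>q \<in> P0\<close> by (auto simp: P0_def)
      ultimately have "False # p = False # q" using Suc.prems(2) unfolding pfree_def by blast
      then show "p = q" by simp
    qed
    have l1: "\<forall>p\<in>P1. length p \<le> n"
    proof
      fix p assume "p \<in> P1"
      then have "length (True # p) \<le> Suc n" using Suc.prems(3) by (auto simp: P1_def)
      then show "length p \<le> n" by simp
    qed
    have l0: "\<forall>p\<in>P0. length p \<le> n"
    proof
      fix p assume "p \<in> P0"
      then have "length (False # p) \<le> Suc n" using Suc.prems(3) by (auto simp: P0_def)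
      then show "length p \<le> n" by simp
    qed
    have s1: "(\<Sum>p\<in>P1. (1/2::real) ^ length p) \<le> 1" using Suc.IH fin1 pf1 l1 by blast
    have s0: "(\<Sum>p\<in>P0. (1/2::real) ^ length p) \<le> 1" using Suc.IH fin0 pf0 l0 by blast
    have "(\<Sum>p\<in>P. (1/2::real) ^ length p) =
        (\<Sum>p\<in>Cons True ` P1. (1/2::real) ^ length p) + (\<Sum>p\<in>Cons False ` P0. (1/2::real) ^ length p)"
      apply (subst P)
      apply (rule sum.union_disjoint)
      using fin1 fin0 apply auto
      done
    also have "\<dots> = (\<Sum>p\<in>P1. (1/2::real) ^ length p) / 2 + (\<Sum>p\<in>P0. (1/2::real) ^ length p) / 2"
    proof -
      have i1: "inj_on (Cons True) P1" and i0: "inj_on (Cons False) P0" by (auto simp: inj_on_def)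
      have a: "(\<Sum>p\<in>Cons b ` Pb. (1/2::real) ^ length p) = (\<Sum>p\<in>Pb. (1/2::real) ^ length p) / 2"
        if "inj_on (Cons b) Pb" for b Pb
        using that by (simp add: sum.reindex sum_divide_distrib)
      show ?thesis using a[OF i1] a[OF i0] by simp
    qed
    also have "\<dots> \<le> 1" using s1 s0 by simp
    finally show ?thesis .
  qed
qed

lemma kraft:
  assumes "finite P" "pfree P"
  shows "(\<Sum>p\<in>P. (1/2::real) ^ length p) \<le> 1"
proof -
  have "\<forall>p\<in>P. length p \<le> Max (length ` P)" using assms(1) by auto
  then show ?thesis using kraft_aux assms by blast
qed

lemma KC_kraft:
  assumes U: "optimal_prefix_machine U" and fin: "finite X"
  shows "(\<Sum>x\<in>X. (1/2::real) ^ KC U x y) \<le> 1"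
proof -
  define pr where "pr x = (SOME p. length p = KC U x y \<and> U p y = Some x)" for x
  have pr: "length (pr x) = KC U x y \<and> U (pr x) y = Some x" for x
    unfolding pr_def using someI_ex[OF KC_witness[OF U, of x y]] .
  have inj: "inj_on pr X"
  proof (rule inj_onI)
    fix a b assume "a \<in> X" "b \<in> X" "pr a = pr b"
    then have "U (pr a) y = U (pr b) y" by simp
    then show "a = b" using pr[of a] pr[of b] by simp
  qed
  have pf: "pfree (pr ` X)"
  proof -
    have "prefix_machine U" using U unfolding optimal_prefix_machine_def by blast
    then have "\<forall>y p q. U p y \<noteq> None \<and> U q y \<noteq> None \<and> (\<exists>zs. q = p @ zs) \<longrightarrow> p = q"
      unfolding prefix_machine_def by blast
    note H = this
    show ?thesis unfolding pfree_def
    proof (intro ballI impI)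
      fix p q assume "p \<in> pr ` X" "q \<in> pr ` X" "\<exists>zs. q = p @ zs"
      then obtain a b where ab: "p = pr a" "q = pr b" by blast
      have "U p y \<noteq> None" "U q y \<noteq> None" using pr ab by auto
      then show "p = q" using H \<open>\<exists>zs. q = p @ zs\<close> by blast
    qed
  qed
  have "(\<Sum>x\<in>X. (1/2::real) ^ KC U x y) = (\<Sum>p\<in>pr ` X. (1/2::real) ^ length p)"
    unfolding sum.reindex[OF inj] o_def using pr by simp
  also have "\<dots> \<le> 1" using kraft[OF _ pf] fin by blast
  finally show ?thesis .
qed

lemma KC_count:
  assumes U: "optimal_prefix_machine U" and fin: "finite X"
    and lt: "\<forall>x\<in>X. real (KC U x y) < L"
  shows "real (card X) \<le> 2 powr L"
proof -
  have "real (card X) * 2 powr (-L) = (\<Sum>x\<in>X. 2 powr (-L))" by (simp only: sum_constant)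
  also have "\<dots> \<le> (\<Sum>x\<in>X. (1/2::real) ^ KC U x y)"
  proof (rule sum_mono)
    fix x assume "x \<in> X"
    then have "- L \<le> - real (KC U x y)" using lt by auto
    then have "2 powr (-L) \<le> 2 powr (- real (KC U x y))" by (rule powr_mono) simp
    also have "\<dots> = (1/2::real) ^ KC U x y"
      by (simp add: powr_minus powr_realpow power_one_over inverse_eq_divide)
    finally show "2 powr (-L) \<le> (1/2::real) ^ KC U x y" .
  qed
  also have "\<dots> \<le> 1" by (rule KC_kraft[OF U fin])
  finally have h: "real (card X) * 2 powr (-L) \<le> 1" .
  have e: "2 powr (-L) * 2 powr L = (1::real)" using powr_add[of 2 "-L" L] by simp
  have "real (card X) = real (card X) * 2 powr (-L) * 2 powr L" by (simp only: mult.assoc e mult_1_right)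
  also have "\<dots> \<le> 1 * 2 powr L" by (rule mult_right_mono[OF h]) simp
  finally show ?thesis by simp
qed


definition dep :: "nat set \<Rightarrow> (nat \<Rightarrow> bool) set \<Rightarrow> bool" where
  "dep Sv X \<longleftrightarrow> (\<forall>c c'. (\<forall>v\<in>Sv. c v = c' v) \<longrightarrow> (c \<in> X \<longleftrightarrow> c' \<in> X))"

lemma dep_mono: "dep Sv X \<Longrightarrow> Sv \<subseteq> T \<Longrightarrow> dep T X"
  unfolding dep_def by blast

lemma dep_compl: "dep Sv X \<Longrightarrow> dep Sv (- X)"
  unfolding dep_def by blast

lemma dep_INT: "(\<And>j. j \<in> J \<Longrightarrow> dep Sv (X j)) \<Longrightarrow> dep Sv (\<Inter>j\<in>J. X j)"
  unfolding dep_def by blast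

definition PW :: "nat set \<Rightarrow> (nat \<Rightarrow> bool) pmf" where
  "PW W = Pi_pmf W False (\<lambda>_. pmf_of_set UNIV)"

abbreviation Prob :: "nat set \<Rightarrow> (nat \<Rightarrow> bool) set \<Rightarrow> real" where
  "Prob W X \<equiv> measure_pmf.prob (PW W) X"

lemma prob_pair_times:
  "measure_pmf.prob (pair_pmf M N) (A \<times> B) = measure_pmf.prob M A * measure_pmf.prob N B"
proof -
  have "measure_pmf.prob (pair_pmf M N) (A \<times> B) =
        measure_pmf.prob (pair_pmf M N) ((A \<times> B) \<inter> set_pmf (pair_pmf M N))"
    by (rule measure_Int_set_pmf[symmetric])
  also have "(A \<times> B) \<inter> set_pmf (pair_pmf M N) = (A \<inter> set_pmf M) \<times> (B \<inter> set_pmf N)"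
    by auto
  also have "measure_pmf.prob (pair_pmf M N) \<dots> =
       measure_pmf.prob M (A \<inter> set_pmf M) * measure_pmf.prob N (B \<inter> set_pmf N)"
    by (rule measure_pmf_prob_product) (auto intro: countable_subset)
  also have "\<dots> = measure_pmf.prob M A * measure_pmf.prob N B"
    by (simp add: measure_Int_set_pmf)
  finally show ?thesis .
qed

lemma indep:
  assumes W: "finite W" and Sv: "Sv \<subseteq> W" and X: "dep Sv X" and Y: "dep (W - Sv) Y"
  shows "Prob W (X \<inter> Y) = Prob W X * Prob W Y"
proof -
  define h :: "(nat \<Rightarrow> bool) \<times> (nat \<Rightarrow> bool) \<Rightarrow> nat \<Rightarrow> bool"
    where "h = (\<lambda>(f,g) x. if x \<in> Sv then f x else g x)"
  have fS: "finite Sv" using W Sv finite_subset by blast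
  have "PW W = PW (Sv \<union> (W - Sv))" using Sv by (simp add: Un_absorb1)
  also have "\<dots> = map_pmf h (pair_pmf (PW Sv) (PW (W - Sv)))"
    unfolding PW_def h_def using fS W by (intro Pi_pmf_union) auto
  finally have PWe: "PW W = map_pmf h (pair_pmf (PW Sv) (PW (W - Sv)))" .
  have hX: "h (f, g) \<in> X \<longleftrightarrow> f \<in> X" for f g
    using X unfolding dep_def h_def by (metis (no_types, lifting) case_prod_conv)
  have hY: "h (f, g) \<in> Y \<longleftrightarrow> g \<in> Y" for f g
    using Y unfolding dep_def h_def by (metis (no_types, lifting) DiffD2 case_prod_conv)
  have e1: "h -` (X \<inter> Y) = X \<times> Y" using hX hY by auto
  have e2: "h -` X = X \<times> UNIV" using hX by auto
  have e3: "h -` Y = UNIV \<times> Y" using hY by auto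
  show ?thesis
    unfolding PWe measure_map_pmf e1 e2 e3 prob_pair_times by simp
qed

definition Q :: "nat set \<Rightarrow> ('i \<Rightarrow> (nat \<Rightarrow> bool) set) \<Rightarrow> 'i set \<Rightarrow> real" where
  "Q W E U = Prob W (\<Inter>j\<in>U. - E j)"

lemma prob_split:
  "Prob W B = Prob W (A \<inter> B) + Prob W (-A \<inter> B)"
proof -
  have "Prob W (B - A) = Prob W B - Prob W (B \<inter> A)"
    by (rule measure_pmf.finite_measure_Diff') auto
  moreover have "B - A = -A \<inter> B" "B \<inter> A = A \<inter> B" by auto
  ultimately show ?thesis by simp
qed

lemma lll_chain:
  assumes Fin: "finite F" and UF: "U \<subseteq> F"
    and C: "\<And>U' i. U' \<subseteq> F \<Longrightarrow> card U' < card U \<Longrightarrow> i \<in> F - U' \<Longrightarrow>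
               Q W E (insert i U') \<ge> (1 - x i) * Q W E U'"
    and x: "\<forall>i\<in>F. 0 \<le> x i \<and> x i < 1"
    and W': "W' \<subseteq> U"
  shows "Q W E U \<ge> (\<Prod>j\<in>W'. 1 - x j) * Q W E (U - W')"
proof -
  have fU0: "finite U" using UF Fin by (rule finite_subset)
  have fW': "finite W'" using W' fU0 by (rule finite_subset)
  from fW' W' show ?thesis
  proof (induction W' rule: finite_induct)
    case empty then show ?case by simp
  next
    case (insert j W'')
    have fU: "finite U" by (rule fU0)
    have sub: "W'' \<subseteq> U" using insert.prems by simp
    have IH: "Q W E U \<ge> (\<Prod>j\<in>W''. 1 - x j) * Q W E (U - W'')" by (rule insert.IH[OF sub])
    have jU: "j \<in> U" using insert.prems by simp
    have eq: "U - W'' = insert j (U - insert j W'')" using jU insert.hyps(2) by blast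
    have cl: "card (U - insert j W'') < card U"
      by (rule psubset_card_mono[OF fU]) (use jU in blast)
    have C1: "Q W E (insert j (U - insert j W'')) \<ge> (1 - x j) * Q W E (U - insert j W'')"
      by (rule C) (use UF jU cl in auto)
    have C2: "Q W E (U - W'') \<ge> (1 - x j) * Q W E (U - insert j W'')"
      using C1 eq by simp
    have pn: "(\<Prod>j\<in>W''. 1 - x j) \<ge> 0"
    proof (rule prod_nonneg)
      fix k assume "k \<in> W''"
      then have "k \<in> F" using sub UF by blast
      then show "0 \<le> 1 - x k" using x by fastforce
    qed
    have "(\<Prod>j\<in>W''. 1 - x j) * ((1 - x j) * Q W E (U - insert j W'')) \<le>
        (\<Prod>j\<in>W''. 1 - x j) * Q W E (U - W'')"
      by (rule mult_left_mono[OF C2 pn])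
    also have "\<dots> \<le> Q W E U" by (rule IH)
    finally have f: "(\<Prod>j\<in>W''. 1 - x j) * ((1 - x j) * Q W E (U - insert j W'')) \<le> Q W E U" .
    have pe: "(\<Prod>j\<in>insert j W''. 1 - x j) = (1 - x j) * (\<Prod>j\<in>W''. 1 - x j)"
      using insert.hyps by simp
    show ?case unfolding pe using f by (simp only: mult_ac)
  qed
qed

lemma lll:
  fixes F :: "'i set" and V :: "'i \<Rightarrow> nat set" and E :: "'i \<Rightarrow> (nat \<Rightarrow> bool) set"
  assumes W: "finite W" and Fin: "finite F"
    and VW: "\<forall>i\<in>F. V i \<subseteq> W" and dp: "\<forall>i\<in>F. dep (V i) (E i)"
    and x: "\<forall>i\<in>F. 0 \<le> x i \<and> x i < 1"
    and P: "\<forall>i\<in>F. Prob W (E i) \<le> x i * (\<Prod>j\<in>{j\<in>F. j \<noteq> i \<and> V j \<inter> V i \<noteq> {}}. 1 - x j)"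
  shows "Prob W (\<Inter>i\<in>F. - E i) \<ge> (\<Prod>i\<in>F. 1 - x i)"
proof -
  have C: "\<And>U i. U \<subseteq> F \<Longrightarrow> i \<in> F - U \<Longrightarrow> Q W E (insert i U) \<ge> (1 - x i) * Q W E U"
  proof -
    fix U i
    show "U \<subseteq> F \<Longrightarrow> i \<in> F - U \<Longrightarrow> Q W E (insert i U) \<ge> (1 - x i) * Q W E U"
    proof (induction "card U" arbitrary: U i rule: less_induct)
      case less
      have fU: "finite U" using less.prems Fin finite_subset by blast
      define N where "N = {j\<in>U. V j \<inter> V i \<noteq> {}}"
      define U' where "U' = U - N"
      have NU: "N \<subseteq> U" unfolding N_def by auto
      have chain: "Q W E U \<ge> (\<Prod>j\<in>N. 1 - x j) * Q W E U'"
        unfolding U'_def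
        by (rule lll_chain[OF Fin less.prems(1) _ x NU]) (rule less.hyps; auto)
      have iF: "i \<in> F" using less.prems by auto
      have depU': "dep (W - V i) (\<Inter>j\<in>U'. - E j)"
      proof (rule dep_INT, rule dep_compl)
        fix j assume "j \<in> U'"
        then have "j \<in> F" "V j \<inter> V i = {}" using less.prems unfolding U'_def N_def by auto
        then have "V j \<subseteq> W - V i" "dep (V j) (E j)" using VW dp by auto
        then show "dep (W - V i) (E j)" using dep_mono by blast
      qed
      have "Q W E U - Q W E (insert i U) = Prob W (E i \<inter> (\<Inter>j\<in>U. - E j))"
        unfolding Q_def using prob_split[of W "\<Inter>j\<in>U. - E j" "E i"] by (simp add: Int_assoc)
      also have "\<dots> \<le> Prob W (E i \<inter> (\<Inter>j\<in>U'. - E j))"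
        by (rule measure_pmf.finite_measure_mono) (auto simp: U'_def)
      also have "\<dots> = Prob W (E i) * Q W E U'"
        unfolding Q_def using indep[OF W _ _ depU'] VW dp iF by auto
      also have "\<dots> \<le> (x i * (\<Prod>j\<in>N. 1 - x j)) * Q W E U'"
      proof (rule mult_right_mono)
        have sub: "N \<subseteq> {j\<in>F. j \<noteq> i \<and> V j \<inter> V i \<noteq> {}}"
          using less.prems unfolding N_def by auto
        have fin2: "finite {j\<in>F. j \<noteq> i \<and> V j \<inter> V i \<noteq> {}}" using Fin by auto
        have "(\<Prod>j\<in>{j\<in>F. j \<noteq> i \<and> V j \<inter> V i \<noteq> {}}. 1 - x j) =
              (\<Prod>j\<in>N. 1 - x j) * (\<Prod>j\<in>{j\<in>F. j \<noteq> i \<and> V j \<inter> V i \<noteq> {}} - N. 1 - x j)"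
          using prod.subset_diff[OF sub fin2] by (simp add: mult_ac)
        also have "\<dots> \<le> (\<Prod>j\<in>N. 1 - x j) * 1"
          apply (rule mult_left_mono)
           apply (rule prod_le_1) using x apply force
          apply (rule prod_nonneg) using x NU less.prems apply force
          done
        finally have "(\<Prod>j\<in>{j\<in>F. j \<noteq> i \<and> V j \<inter> V i \<noteq> {}}. 1 - x j) \<le> (\<Prod>j\<in>N. 1 - x j)"
          by simp
        then show "Prob W (E i) \<le> x i * (\<Prod>j\<in>N. 1 - x j)"
          using P iF x by (meson mult_left_mono order_trans)
        show "0 \<le> Q W E U'" unfolding Q_def by simp
      qed
      also have "\<dots> = x i * ((\<Prod>j\<in>N. 1 - x j) * Q W E U')" by simp
      also have "\<dots> \<le> x i * Q W E U"
        using chain x iF by (intro mult_left_mono) auto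
      finally show ?case by (simp add: algebra_simps)
    qed
  qed
  have "Q W E F \<ge> (\<Prod>j\<in>F. 1 - x j) * Q W E (F - F)"
    by (rule lll_chain[OF Fin order_refl _ x order_refl]) (rule C; auto)
  then show ?thesis unfolding Q_def by simp
qed


lemma compact_nested:
  fixes C :: "nat \<Rightarrow> (nat \<Rightarrow> bool) set"
  assumes ne: "\<And>k. C k \<noteq> {}" and mono: "\<And>k k'. k \<le> k' \<Longrightarrow> C k' \<subseteq> C k"
    and fd: "\<And>k. \<exists>M. finite M \<and> dep M (C k)"
  shows "\<exists>c. \<forall>k. c \<in> C k"
proof -
  define good where "good \<sigma> n \<longleftrightarrow> (\<forall>k. \<exists>c\<in>C k. \<forall>i<n. c i = \<sigma> i)" for \<sigma> :: "nat \<Rightarrow> bool" and n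
  have step: "good (\<sigma>(n:=True)) (Suc n) \<or> good (\<sigma>(n:=False)) (Suc n)" if g: "good \<sigma> n" for \<sigma> n
  proof (rule ccontr)
    assume a: "\<not> ?thesis"
    have "\<not> good (\<sigma>(n:=True)) (Suc n)" using a by simp
    then obtain k1 where k1: "\<not> (\<exists>c\<in>C k1. \<forall>i<Suc n. c i = (\<sigma>(n:=True)) i)"
      unfolding good_def by blast
    have "\<not> good (\<sigma>(n:=False)) (Suc n)" using a by simp
    then obtain k2 where k2: "\<not> (\<exists>c\<in>C k2. \<forall>i<Suc n. c i = (\<sigma>(n:=False)) i)"
      unfolding good_def by blast
    from g have "\<exists>c\<in>C (max k1 k2). \<forall>i<n. c i = \<sigma> i" unfolding good_def by blast
    then obtain c where c: "c \<in> C (max k1 k2)" "\<forall>i<n. c i = \<sigma> i" by blast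
    have c1: "c \<in> C k1" using c(1) mono[of k1 "max k1 k2"] by (meson max.cobounded1 subsetD)
    have c2: "c \<in> C k2" using c(1) mono[of k2 "max k1 k2"] by (meson max.cobounded2 subsetD)
    show False
    proof (cases "c n")
      case True
      have "\<forall>i<Suc n. c i = (\<sigma>(n:=True)) i"
      proof (intro allI impI)
        fix i assume "i < Suc n"
        then show "c i = (\<sigma>(n:=True)) i" using c(2) True by (cases "i = n") auto
      qed
      then show False using k1 c1 by blast
    next
      case False
      have "\<forall>i<Suc n. c i = (\<sigma>(n:=False)) i"
      proof (intro allI impI)
        fix i assume "i < Suc n"
        then show "c i = (\<sigma>(n:=False)) i" using c(2) False by (cases "i = n") auto
      qed
      then show False using k2 c2 by blast
    qed
  qed
  define nxt where "nxt n s = (if good (s(n:=True)) (Suc n) then s(n:=True) else s(n:=False))"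
    for n and s :: "nat \<Rightarrow> bool"
  define sq where "sq = rec_nat (\<lambda>_. False) nxt"
  have sq0: "sq 0 = (\<lambda>_. False)" and sqS: "sq (Suc n) = nxt n (sq n)" for n
    unfolding sq_def by simp_all
  have inv: "good (sq n) n" for n
  proof (induction n)
    case 0
    show ?case unfolding good_def sq0 using ne by blast
  next
    case (Suc n)
    show ?case
    proof (cases "good ((sq n)(n:=True)) (Suc n)")
      case True then show ?thesis unfolding sqS nxt_def if_P[OF True] .
    next
      case False then show ?thesis using step[OF Suc] unfolding sqS nxt_def if_not_P[OF False] by blast
    qed
  qed
  have upd: "sq (Suc n) i = sq n i" if "i \<noteq> n" for n i
    unfolding sqS nxt_def using that by simp
  have stab: "sq n i = sq (Suc i) i" if "i < n" for n i
    using that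
  proof (induction n)
    case 0 then show ?case by simp
  next
    case (Suc n)
    show ?case
    proof (cases "i = n")
      case True then show ?thesis by simp
    next
      case False
      then have "i < n" using Suc.prems by simp
      then show ?thesis using Suc.IH upd[OF False] by simp
    qed
  qed
  define \<omega> where "\<omega> i = sq (Suc i) i" for i
  have "\<omega> \<in> C k" for k
  proof -
    obtain M where M: "finite M" "dep M (C k)" using fd by blast
    obtain n where n: "M \<subseteq> {..<n}" using finite_nat_bounded[OF M(1)] by blast
    obtain c where c: "c \<in> C k" "\<forall>i<n. c i = sq n i" using inv[of n] unfolding good_def by blast
    have "\<forall>v\<in>M. c v = \<omega> v"
    proof
      fix v assume "v \<in> M"
      then have "v < n" using n by auto
      then show "c v = \<omega> v" using c(2) stab[of v n] unfolding \<omega>_def by simp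
    qed
    then show ?thesis using M(2) c(1) unfolding dep_def by blast
  qed
  then show ?thesis by blast
qed


definition rep :: "(nat \<Rightarrow> nat \<Rightarrow> bool) \<Rightarrow> nat \<Rightarrow> nat" where
  "rep R i = (LEAST j. R i j)"

definition omg :: "(nat \<Rightarrow> nat \<Rightarrow> bool) \<Rightarrow> (nat \<Rightarrow> bool) \<Rightarrow> nat \<Rightarrow> bool" where
  "omg R c i = c (rep R i)"

definition Bad :: "machine \<Rightarrow> (nat \<Rightarrow> nat \<Rightarrow> bool) \<Rightarrow> real \<Rightarrow> nat set \<Rightarrow> (nat \<Rightarrow> bool) set" where
  "Bad U R \<gamma> A = {c. \<forall>t\<in>A. real (KC U (bl_to_nat (restrict_seq (omg R c) A)) t)
       < \<gamma> * real (free_bits R A) - real (KC U (set_encode A) t) - log 2 (real (class_size R t))}"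

lemma equivp_R: "equivp R \<Longrightarrow> R x y = (R x = R y)"
  by (simp add: equivp_def)

lemma rep_R: "equivp R \<Longrightarrow> R i (rep R i)"
  unfolding rep_def by (rule LeastI[of _ i]) (simp add: equivp_reflp)

lemma rep_iff: assumes "equivp R" shows "rep R i = rep R j \<longleftrightarrow> R i j"
proof
  assume "R i j"
  then have "R i = R j" using equivp_R[OF assms] by simp
  then show "rep R i = rep R j" unfolding rep_def by simp
next
  assume h: "rep R i = rep R j"
  have a: "R i = R (rep R i)" using equivp_R[OF assms, of i "rep R i"] rep_R[OF assms, of i] by simp
  have b: "R j = R (rep R j)" using equivp_R[OF assms, of j "rep R j"] rep_R[OF assms, of j] by simp
  have "R i = R j" using h a b by simp
  then show "R i j" using equivp_R[OF assms, of i j] by simp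
qed

lemma eq_class_rep: assumes E: "equivp R" shows "eq_class R i = {s. rep R s = rep R i}"
proof (rule set_eqI)
  fix s
  have "s \<in> eq_class R i \<longleftrightarrow> R i s" by (simp add: eq_class_def)
  also have "\<dots> \<longleftrightarrow> rep R i = rep R s" by (simp add: rep_iff[OF E])
  also have "\<dots> \<longleftrightarrow> s \<in> {s. rep R s = rep R i}" by auto
  finally show "s \<in> eq_class R i \<longleftrightarrow> s \<in> {s. rep R s = rep R i}" .
qed

lemma rep_rep: assumes E: "equivp R" shows "rep R (rep R i) = rep R i"
proof -
  have "rep R i = rep R (rep R i)" using rep_iff[OF E, of i "rep R i"] rep_R[OF E, of i] by simp
  then show ?thesis by simp
qed

lemma free_bits_card:
  assumes E: "equivp R" shows "free_bits R A = card (rep R ` A)"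
proof -
  have e1: "{C \<in> range (eq_class R). C \<inter> A \<noteq> {}} = eq_class R ` A"
  proof (rule set_eqI, rule iffI)
    fix C assume "C \<in> {C \<in> range (eq_class R). C \<inter> A \<noteq> {}}"
    then obtain y a where C: "C = eq_class R y" and a: "a \<in> C" "a \<in> A" by blast
    then have "R y a" unfolding eq_class_def by simp
    then have "eq_class R y = eq_class R a" unfolding eq_class_def using equivp_R[OF E] by simp
    then show "C \<in> eq_class R ` A" using C a by blast
  next
    fix C assume "C \<in> eq_class R ` A"
    then obtain a where a: "a \<in> A" "C = eq_class R a" by blast
    then have "a \<in> C" unfolding eq_class_def using E by (simp add: equivp_reflp)
    then show "C \<in> {C \<in> range (eq_class R). C \<inter> A \<noteq> {}}" using a by blast
  qed
  have e2: "eq_class R ` A = eq_class R ` (rep R ` A)"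
  proof -
    have "eq_class R (rep R a) = eq_class R a" for a
      using eq_class_rep[OF E] rep_rep[OF E] by simp
    then show ?thesis by (simp add: image_image)
  qed
  have inj: "inj_on (eq_class R) (rep R ` A)"
  proof (rule inj_onI)
    fix x y assume "x \<in> rep R ` A" "y \<in> rep R ` A" "eq_class R x = eq_class R y"
    then obtain a b where ab: "x = rep R a" "y = rep R b" and e: "eq_class R x = eq_class R y" by blast
    have "x \<in> eq_class R x" unfolding eq_class_def using E by (simp add: equivp_reflp)
    then have "x \<in> eq_class R y" using e by simp
    then have "rep R x = rep R y" using eq_class_rep[OF E] by simp
    then show "x = y" using ab rep_rep[OF E] by simp
  qed
  show ?thesis unfolding free_bits_def e1 e2 using card_image[OF inj] .
qed

lemma restrict_seq_omg: "restrict_seq (omg R c) A = map (\<lambda>i. c (rep R i)) (sorted_list_of_set A)"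
  unfolding restrict_seq_def omg_def by simp

lemma dep_restrict:
  fixes c c' :: "nat \<Rightarrow> bool"
  assumes "finite A" "\<forall>v\<in>rep R ` A. c v = c' v"
  shows "restrict_seq (omg R c) A = restrict_seq (omg R c') A"
  unfolding restrict_seq_omg using assms by (intro map_cong) auto

lemma dep_Bad: "finite A \<Longrightarrow> dep (rep R ` A) (Bad U R \<gamma> A)"
  unfolding dep_def Bad_def
proof (intro allI impI)
  fix c c' :: "nat \<Rightarrow> bool" assume "finite A" "\<forall>v\<in>rep R ` A. c v = c' v"
  then have "restrict_seq (omg R c) A = restrict_seq (omg R c') A" by (rule dep_restrict)
  then show "c \<in> {c. \<forall>t\<in>A. real (KC U (bl_to_nat (restrict_seq (omg R c) A)) t)
       < \<gamma> * real (free_bits R A) - real (KC U (set_encode A) t) - log 2 (real (class_size R t))} =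
    (c' \<in> {c. \<forall>t\<in>A. real (KC U (bl_to_nat (restrict_seq (omg R c) A)) t)
       < \<gamma> * real (free_bits R A) - real (KC U (set_encode A) t) - log 2 (real (class_size R t))})"
    by simp
qed

lemma PW_sub:
  assumes W: "finite W" and Sv: "Sv \<subseteq> W" and X: "dep Sv X"
  shows "Prob W X = Prob Sv X"
proof -
  define h :: "(nat \<Rightarrow> bool) \<Rightarrow> nat \<Rightarrow> bool" where "h f x = (if x \<in> Sv then f x else False)" for f x
  have "PW Sv = map_pmf h (PW W)"
    unfolding PW_def h_def by (rule Pi_pmf_subset[OF W Sv])
  then have "Prob Sv X = Prob W (h -` X)" by simp
  also have "h -` X = X"
  proof (rule set_eqI)
    fix f
    have "\<forall>v\<in>Sv. h f v = f v" unfolding h_def by simp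
    then show "f \<in> h -` X \<longleftrightarrow> f \<in> X" using X unfolding dep_def by auto
  qed
  finally show ?thesis by simp
qed

lemma supp_PW: "finite V \<Longrightarrow> set_pmf (PW V) \<subseteq> {f. \<forall>x. x \<notin> V \<longrightarrow> f x = False}"
  unfolding PW_def by (rule set_Pi_pmf_subset)

lemma finite_supp_PW: "finite V \<Longrightarrow> finite (set_pmf (PW V))"
proof -
  assume V: "finite V"
  have "set_pmf (PW V) = PiE_dflt V False (set_pmf \<circ> (\<lambda>_. pmf_of_set UNIV))"
    unfolding PW_def by (rule set_Pi_pmf[OF V])
  moreover have "finite (PiE_dflt V False (set_pmf \<circ> (\<lambda>_. pmf_of_set (UNIV::bool set))))"
    using V by (intro finite_PiE_dflt) auto
  ultimately show ?thesis by simp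
qed

lemma prob_count:
  assumes V: "finite V"
  shows "Prob V X = real (card (X \<inter> set_pmf (PW V))) * (1/2) ^ card V"
proof -
  have fin: "finite (X \<inter> set_pmf (PW V))" using finite_supp_PW[OF V] by simp
  have "Prob V X = Prob V (X \<inter> set_pmf (PW V))" by (simp add: measure_Int_set_pmf)
  also have "\<dots> = (\<Sum>c\<in>X \<inter> set_pmf (PW V). pmf (PW V) c)"
    by (rule measure_measure_pmf_finite[OF fin])
  also have "\<dots> = (\<Sum>c\<in>X \<inter> set_pmf (PW V). (1/2) ^ card V)"
  proof (rule sum.cong[OF refl])
    fix c assume "c \<in> X \<inter> set_pmf (PW V)"
    then have "\<forall>x. x \<notin> V \<longrightarrow> c x = False" using supp_PW[OF V] by blast
    then have "pmf (PW V) c = (\<Prod>x\<in>V. pmf (pmf_of_set (UNIV::bool set)) (c x))"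
      unfolding PW_def by (intro pmf_Pi') (use V in auto)
    also have "\<dots> = (\<Prod>x\<in>V. 1/2)" by simp
    also have "\<dots> = (1/2) ^ card V" by simp
    finally show "pmf (PW V) c = (1/2) ^ card V" .
  qed
  also have "\<dots> = real (card (X \<inter> set_pmf (PW V))) * (1/2) ^ card V" by simp
  finally show ?thesis .
qed


lemma PB:
  assumes U: "optimal_prefix_machine U" and E: "equivp R" and A: "finite A" and t: "t \<in> A"
    and W: "finite W" and VW: "rep R ` A \<subseteq> W"
  shows "Prob W (Bad U R \<gamma> A) \<le> 2 powr (\<gamma> * real (free_bits R A) - real (KC U (set_encode A) t)
            - log 2 (real (class_size R t)) - real (free_bits R A))"
proof -
  define L where "L = \<gamma> * real (free_bits R A) - real (KC U (set_encode A) t) - log 2 (real (class_size R t))"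
  define V where "V = rep R ` A"
  define g where "g c = restrict_seq (omg R c) A" for c
  define Bt where "Bt = {c. real (KC U (bl_to_nat (g c)) t) < L}"
  have fV: "finite V" unfolding V_def using A by simp
  have sub: "Bad U R \<gamma> A \<subseteq> Bt"
  proof
    fix c assume "c \<in> Bad U R \<gamma> A"
    then have "\<forall>t\<in>A. real (KC U (bl_to_nat (restrict_seq (omg R c) A)) t)
       < \<gamma> * real (free_bits R A) - real (KC U (set_encode A) t) - log 2 (real (class_size R t))"
      unfolding Bad_def by simp
    from bspec[OF this t] show "c \<in> Bt" unfolding Bt_def L_def g_def by simp
  qed
  have depB: "dep V Bt" unfolding dep_def
  proof (intro allI impI)
    fix c c' :: "nat \<Rightarrow> bool" assume "\<forall>v\<in>V. c v = c' v"
    then have "g c = g c'" unfolding g_def V_def using dep_restrict[OF A] by blast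
    then show "(c \<in> Bt) = (c' \<in> Bt)" unfolding Bt_def by simp
  qed
  have "Prob W (Bad U R \<gamma> A) \<le> Prob W Bt"
    by (rule measure_pmf.finite_measure_mono[OF sub]) simp
  also have "\<dots> = Prob V Bt" using PW_sub[OF W _ depB] VW unfolding V_def by simp
  also have "\<dots> = real (card (Bt \<inter> set_pmf (PW V))) * (1/2) ^ card V" by (rule prob_count[OF fV])
  finally have P1: "Prob W (Bad U R \<gamma> A) \<le> real (card (Bt \<inter> set_pmf (PW V))) * (1/2) ^ card V" .
  define G where "G = {xs :: bool list. length xs = card A \<and> real (KC U (bl_to_nat xs) t) < L}"
  have fG: "finite G"
    by (rule finite_subset[of _ "{xs :: bool list. length xs = card A}"]) (auto simp: G_def finite_list_length)
  have inj: "inj_on g (Bt \<inter> set_pmf (PW V))"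
  proof (rule inj_onI)
    fix c c' assume c: "c \<in> Bt \<inter> set_pmf (PW V)" and c': "c' \<in> Bt \<inter> set_pmf (PW V)" and e: "g c = g c'"
    have e2: "\<forall>i\<in>set (sorted_list_of_set A). c (rep R i) = c' (rep R i)"
      using e unfolding g_def restrict_seq_omg map_eq_conv .
    then have e3: "\<forall>i\<in>A. c (rep R i) = c' (rep R i)" using A by simp
    show "c = c'"
    proof (rule ext)
      fix x
      show "c x = c' x"
      proof (cases "x \<in> V")
        case True
        then obtain a where "a \<in> A" "x = rep R a" unfolding V_def by blast
        then show ?thesis using e3 by simp
      next
        case False
        then show ?thesis using supp_PW[OF fV] c c' by blast
      qed
    qed
  qed
  have img: "g ` (Bt \<inter> set_pmf (PW V)) \<subseteq> G"
  proof
    fix xs assume "xs \<in> g ` (Bt \<inter> set_pmf (PW V))"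
    then obtain c where c: "c \<in> Bt" "xs = g c" by blast
    have "length xs = card A" unfolding c(2) g_def restrict_seq_omg by simp
    then show "xs \<in> G" using c unfolding G_def Bt_def by simp
  qed
  have "card (Bt \<inter> set_pmf (PW V)) \<le> card G" by (rule card_inj_on_le[OF inj img fG])
  also have "card G = card (bl_to_nat ` G)"
    by (rule card_image[symmetric]) (rule inj_on_subset[OF bl_to_nat_inj], simp)
  finally have c1: "real (card (Bt \<inter> set_pmf (PW V))) \<le> real (card (bl_to_nat ` G))" by simp
  have "real (card (bl_to_nat ` G)) \<le> 2 powr L"
    by (rule KC_count[OF U]) (use fG in \<open>auto simp: G_def\<close>)
  with c1 have c2: "real (card (Bt \<inter> set_pmf (PW V))) \<le> 2 powr L" by linarith
  have cV: "card V = free_bits R A" unfolding V_def using free_bits_card[OF E] by simp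
  have h: "(1/2::real) ^ card V = 2 powr (- real (free_bits R A))"
    unfolding cV by (simp add: powr_minus powr_realpow power_one_over inverse_eq_divide)
  have "real (card (Bt \<inter> set_pmf (PW V))) * (1/2) ^ card V \<le> 2 powr L * (1/2) ^ card V"
    by (rule mult_right_mono[OF c2]) simp
  also have "\<dots> = 2 powr (L - real (free_bits R A))"
    unfolding h by (simp add: powr_diff powr_minus divide_inverse)
  finally show ?thesis using P1 unfolding L_def by linarith
qed


definition val :: "machine \<Rightarrow> (nat \<Rightarrow> nat \<Rightarrow> bool) \<Rightarrow> nat set \<Rightarrow> nat \<Rightarrow> real" where
  "val U R A t = 2 powr (- real (KC U (set_encode A) t)) / real (class_size R t)"

definition mu :: "machine \<Rightarrow> (nat \<Rightarrow> nat \<Rightarrow> bool) \<Rightarrow> nat set \<Rightarrow> real" where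
  "mu U R A = Min (val U R A ` A)"

definition xw :: "machine \<Rightarrow> (nat \<Rightarrow> nat \<Rightarrow> bool) \<Rightarrow> real \<Rightarrow> nat set \<Rightarrow> real" where
  "xw U R \<delta> A = 2 powr (- \<delta> * real (free_bits R A)) * mu U R A"

lemma class_size_pos:
  assumes E: "equivp R" and fc: "\<forall>x. finite (eq_class R x)"
  shows "class_size R t \<ge> 1"
proof -
  have "t \<in> eq_class R t" unfolding eq_class_def using E by (simp add: equivp_reflp)
  then have "eq_class R t \<noteq> {}" by blast
  then show ?thesis unfolding class_size_def using fc
    by (simp add: Suc_leI card_gt_0_iff)
qed

lemma val_pos:
  assumes E: "equivp R" and fc: "\<forall>x. finite (eq_class R x)"
  shows "0 < val U R A t" "val U R A t \<le> 1"
proof -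
  have m: "real (class_size R t) \<ge> 1" using class_size_pos[OF E fc, of t] by simp
  have p: "2 powr (- real (KC U (set_encode A) t)) \<le> 1"
    by (rule order_trans[OF powr_mono[of "- real (KC U (set_encode A) t)" 0 2]]) auto
  show "0 < val U R A t" unfolding val_def using m by simp
  have "val U R A t \<le> 2 powr (- real (KC U (set_encode A) t))"
    unfolding val_def using m by (simp add: divide_le_eq)
  then show "val U R A t \<le> 1" using p by linarith
qed

lemma mu_le: "finite A \<Longrightarrow> t \<in> A \<Longrightarrow> mu U R A \<le> val U R A t"
  unfolding mu_def by (rule Min_le) auto

lemma mu_in: "finite A \<Longrightarrow> A \<noteq> {} \<Longrightarrow> \<exists>t\<in>A. mu U R A = val U R A t"
proof -
  assume "finite A" "A \<noteq> {}"
  then have "Min (val U R A ` A) \<in> val U R A ` A" by (intro Min_in) auto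
  then show ?thesis unfolding mu_def by auto
qed

lemma mu_bounds:
  assumes E: "equivp R" and fc: "\<forall>x. finite (eq_class R x)" and A: "finite A" "A \<noteq> {}"
  shows "0 < mu U R A" "mu U R A \<le> 1"
proof -
  obtain t where "t \<in> A" "mu U R A = val U R A t" using mu_in[OF A] by blast
  then show "0 < mu U R A" "mu U R A \<le> 1" using val_pos[OF E fc] by auto
qed

lemma exp_le_one_minus:
  fixes y :: real assumes "0 \<le> y" "y \<le> 1/2"
  shows "exp (- 2 * y) \<le> 1 - y"
proof -
  have a: "1 + 2 * y \<le> exp (2 * y)" by (rule exp_ge_add_one_self)
  have b: "0 < 1 + 2 * y" using assms by simp
  have "exp (- 2 * y) = 1 / exp (2 * y)" by (simp add: exp_minus inverse_eq_divide)
  also have "\<dots> \<le> 1 / (1 + 2 * y)" using a b by (intro divide_left_mono) auto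
  also have "\<dots> \<le> 1 - y"
  proof -
    have h: "y * (2 * y) \<le> y * 1" using assms by (intro mult_left_mono) auto
    have "1 \<le> (1 - y) * (1 + 2 * y)" using h by (simp add: algebra_simps)
    then show ?thesis using b by (simp add: divide_le_eq)
  qed
  finally show ?thesis .
qed

lemma prod_exp:
  fixes y :: "'a \<Rightarrow> real"
  assumes Ss: "finite Ss" and y: "\<forall>B\<in>Ss. 0 \<le> y B \<and> y B \<le> 1/2"
  shows "exp (- 2 * (\<Sum>B\<in>Ss. y B)) \<le> (\<Prod>B\<in>Ss. 1 - y B)"
proof -
  have "exp (- 2 * (\<Sum>B\<in>Ss. y B)) = exp (\<Sum>B\<in>Ss. - 2 * y B)" by (simp add: sum_distrib_left)
  also have "\<dots> = (\<Prod>B\<in>Ss. exp (- 2 * y B))" by (rule exp_sum[OF Ss])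
  also have "\<dots> \<le> (\<Prod>B\<in>Ss. 1 - y B)"
    by (rule prod_mono) (use y exp_le_one_minus in auto)
  finally show ?thesis .
qed

lemma NS:
  assumes U: "optimal_prefix_machine U" and E: "equivp R" and fc: "\<forall>x. finite (eq_class R x)"
    and Fin: "finite F" and Fp: "\<forall>B\<in>F. finite B \<and> N \<le> free_bits R B \<and> B \<noteq> {}"
    and dl: "\<delta> > 0" and A: "finite A"
  shows "(\<Sum>B\<in>{B\<in>F. B \<noteq> A \<and> rep R ` B \<inter> rep R ` A \<noteq> {}}. xw U R \<delta> B)
           \<le> 2 powr (- \<delta> * real N) * real (free_bits R A)"
proof -
  define \<epsilon> where "\<epsilon> = 2 powr (- \<delta> * real N)"
  have \<epsilon>pos: "0 \<le> \<epsilon>" unfolding \<epsilon>_def by simp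
  define cls where "cls v = {s. rep R s = v}" for v
  define P where "P = Sigma (rep R ` A) cls"
  define Nb where "Nb = {B\<in>F. B \<noteq> A \<and> rep R ` B \<inter> rep R ` A \<noteq> {}}"
  have cls_eq: "cls (rep R a) = eq_class R a" for a
    unfolding cls_def using eq_class_rep[OF E, of a] by simp
  have fcls: "\<forall>v\<in>rep R ` A. finite (cls v)" using cls_eq fc by auto
  have fP: "finite P" unfolding P_def using A fcls by (intro finite_SigmaI) auto
  have xw_nn: "0 \<le> xw U R \<delta> B" if "B \<in> F" for B
    unfolding xw_def using mu_bounds(1)[OF E fc, of B U] Fp that by simp
  have xw_le: "xw U R \<delta> B \<le> \<epsilon> * val U R B s" if "B \<in> F" "s \<in> B" for B s
  proof -
    have "2 powr (- \<delta> * real (free_bits R B)) \<le> \<epsilon>"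
      unfolding \<epsilon>_def using Fp that dl by (intro powr_mono) auto
    moreover have "0 \<le> mu U R B" "mu U R B \<le> val U R B s"
      using mu_bounds(1)[OF E fc, of B U] Fp that mu_le[of B s U R] by auto
    ultimately show ?thesis unfolding xw_def
      by (meson \<epsilon>pos mult_mono)
  qed
  have inner: "(\<Sum>B\<in>{B\<in>F. s \<in> B}. xw U R \<delta> B) \<le> \<epsilon> / real (class_size R s)" for s
  proof -
    have m: "real (class_size R s) \<ge> 1" using class_size_pos[OF E fc, of s] by simp
    have fF: "finite {B\<in>F. s \<in> B}" using Fin by simp
    have "(\<Sum>B\<in>{B\<in>F. s \<in> B}. xw U R \<delta> B) \<le> (\<Sum>B\<in>{B\<in>F. s \<in> B}. \<epsilon> * val U R B s)"
      by (rule sum_mono) (use xw_le in auto)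
    also have "\<dots> = \<epsilon> / real (class_size R s) * (\<Sum>B\<in>{B\<in>F. s \<in> B}. 2 powr (- real (KC U (set_encode B) s)))"
      unfolding val_def by (simp add: sum_distrib_left)
    also have "(\<Sum>B\<in>{B\<in>F. s \<in> B}. 2 powr (- real (KC U (set_encode B) s))) =
               (\<Sum>x\<in>set_encode ` {B\<in>F. s \<in> B}. (1/2::real) ^ KC U x s)"
    proof -
      have inj: "inj_on set_encode {B\<in>F. s \<in> B}"
        by (rule inj_on_subset[OF inj_on_set_encode]) (use Fp in auto)
      show ?thesis unfolding sum.reindex[OF inj] o_def
        by (simp add: powr_minus powr_realpow power_one_over inverse_eq_divide)
    qed
    also have "\<dots> \<le> 1" by (rule KC_kraft[OF U]) (use fF in simp)
    finally have "(\<Sum>B\<in>{B\<in>F. s \<in> B}. xw U R \<delta> B) \<le> \<epsilon> / real (class_size R s) * 1"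
      using \<epsilon>pos m by (meson divide_nonneg_nonneg mult_left_mono order_trans zero_le_one order.trans[OF zero_le_one m] )
    then show ?thesis by simp
  qed
  have cover: "(\<Sum>B\<in>Nb. xw U R \<delta> B) \<le> (\<Sum>p\<in>P. \<Sum>B\<in>{B\<in>F. snd p \<in> B}. xw U R \<delta> B)"
  proof -
    have "(\<Sum>B\<in>Nb. xw U R \<delta> B) \<le> (\<Sum>B\<in>Nb. \<Sum>p\<in>P. if snd p \<in> B then xw U R \<delta> B else 0)"
    proof (rule sum_mono)
      fix B assume B: "B \<in> Nb"
      then obtain v where v: "v \<in> rep R ` B" "v \<in> rep R ` A" unfolding Nb_def by blast
      then obtain b where b: "b \<in> B" "v = rep R b" by blast
      have pP: "(v, b) \<in> P" unfolding P_def cls_def using v b by simp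
      have "xw U R \<delta> B = (if snd (v, b) \<in> B then xw U R \<delta> B else 0)" using b by simp
      also have "\<dots> \<le> (\<Sum>p\<in>P. if snd p \<in> B then xw U R \<delta> B else 0)"
        by (rule member_le_sum[OF pP]) (use xw_nn B Nb_def fP in auto)
      finally show "xw U R \<delta> B \<le> (\<Sum>p\<in>P. if snd p \<in> B then xw U R \<delta> B else 0)" .
    qed
    also have "\<dots> \<le> (\<Sum>B\<in>F. \<Sum>p\<in>P. if snd p \<in> B then xw U R \<delta> B else 0)"
      by (rule sum_mono2[OF Fin]) (auto simp: Nb_def intro!: sum_nonneg xw_nn)
    also have "\<dots> = (\<Sum>p\<in>P. \<Sum>B\<in>F. if snd p \<in> B then xw U R \<delta> B else 0)"
      by (rule sum.swap)
    also have "\<dots> = (\<Sum>p\<in>P. \<Sum>B\<in>{B\<in>F. snd p \<in> B}. xw U R \<delta> B)"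
      by (simp add: sum.inter_filter[OF Fin])
    finally show ?thesis .
  qed
  also have "\<dots> \<le> (\<Sum>p\<in>P. \<epsilon> / real (class_size R (snd p)))"
    by (rule sum_mono) (rule inner)
  also have "\<dots> = (\<Sum>v\<in>rep R ` A. \<Sum>s\<in>cls v. \<epsilon> / real (class_size R s))"
    unfolding P_def using sum.Sigma[of "rep R ` A" cls "\<lambda>v s. \<epsilon> / real (class_size R s)"] A fcls
    by (simp add: case_prod_unfold)
  also have "\<dots> = (\<Sum>v\<in>rep R ` A. \<epsilon>)"
  proof (rule sum.cong[OF refl])
    fix v assume "v \<in> rep R ` A"
    then obtain a where a: "v = rep R a" by blast
    have cs: "class_size R s = card (cls v)" if "s \<in> cls v" for s
    proof -
      have "rep R s = v" using that unfolding cls_def by simp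
      then have "eq_class R s = cls v" unfolding cls_def using eq_class_rep[OF E, of s] by simp
      then show ?thesis unfolding class_size_def by simp
    qed
    have "cls v = eq_class R a" using cls_eq a by simp
    then have ne: "card (cls v) \<noteq> 0" using class_size_pos[OF E fc, of a] unfolding class_size_def by simp
    have "(\<Sum>s\<in>cls v. \<epsilon> / real (class_size R s)) = (\<Sum>s\<in>cls v. \<epsilon> / real (card (cls v)))"
      by (rule sum.cong[OF refl]) (simp add: cs)
    also have "\<dots> = \<epsilon>" using ne by simp
    finally show "(\<Sum>s\<in>cls v. \<epsilon> / real (class_size R s)) = \<epsilon>" .
  qed
  also have "\<dots> = \<epsilon> * real (free_bits R A)"
    using free_bits_card[OF E, of A] by simp
  finally show ?thesis unfolding Nb_def \<epsilon>_def .
qed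


lemma LLLcond:
  assumes U: "optimal_prefix_machine U" and E: "equivp R" and fc: "\<forall>x. finite (eq_class R x)"
    and Fin: "finite F" and Fp: "\<forall>B\<in>F. finite B \<and> N \<le> free_bits R B \<and> B \<noteq> {}"
    and W: "finite W" and VW: "\<forall>B\<in>F. rep R ` B \<subseteq> W" and AF: "A \<in> F"
    and dl: "\<delta> > 0" and g: "\<gamma> = 1 - 2 * \<delta>"
    and e1: "2 powr (- \<delta> * real N) \<le> 1/2" and e2: "2 * 2 powr (- \<delta> * real N) \<le> \<delta> * ln 2"
  shows "Prob W (Bad U R \<gamma> A) \<le> xw U R \<delta> A *
           (\<Prod>B\<in>{B\<in>F. B \<noteq> A \<and> rep R ` B \<inter> rep R ` A \<noteq> {}}. 1 - xw U R \<delta> B)"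
proof -
  define \<epsilon> where "\<epsilon> = 2 powr (- \<delta> * real N)"
  define f where "f = real (free_bits R A)"
  define Nb where "Nb = {B\<in>F. B \<noteq> A \<and> rep R ` B \<inter> rep R ` A \<noteq> {}}"
  have A: "finite A" "A \<noteq> {}" using Fp AF by auto
  obtain t0 where t0: "t0 \<in> A" "mu U R A = val U R A t0" using mu_in[OF A] by blast
  define K where "K = real (KC U (set_encode A) t0)"
  define m where "m = real (class_size R t0)"
  have m1: "m \<ge> 1" unfolding m_def using class_size_pos[OF E fc, of t0] by simp
  have f0: "f \<ge> 0" unfolding f_def by simp
  have PB1: "Prob W (Bad U R \<gamma> A) \<le> 2 powr (\<gamma> * f - K - log 2 m - f)"
    unfolding f_def K_def m_def using PB[OF U E A(1) t0(1) W] VW AF by blast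
  have eq: "\<gamma> * f - K - log 2 m - f = (- \<delta> * f) + ((- \<delta> * f) + (- K)) - log 2 m"
    unfolding g by (simp add: algebra_simps)
  have "2 powr (\<gamma> * f - K - log 2 m - f) = 2 powr ((- \<delta> * f) + ((- \<delta> * f) + (- K)) - log 2 m)"
    by (simp only: eq)
  also have "\<dots> = 2 powr (- \<delta> * f) * (2 powr (- \<delta> * f) * 2 powr (- K)) / 2 powr (log 2 m)"
    by (simp only: powr_diff powr_add)
  also have "\<dots> = 2 powr (- \<delta> * f) * (2 powr (- \<delta> * f) * 2 powr (- K)) / m"
    using m1 by simp
  also have "\<dots> = 2 powr (- \<delta> * f) * xw U R \<delta> A"
    unfolding xw_def t0(2) val_def f_def[symmetric] K_def[symmetric] m_def[symmetric] by simp
  finally have PB2: "Prob W (Bad U R \<gamma> A) \<le> 2 powr (- \<delta> * f) * xw U R \<delta> A" using PB1 by simp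
  have xw_b: "0 \<le> xw U R \<delta> B \<and> xw U R \<delta> B \<le> 1/2" if "B \<in> F" for B
  proof -
    have B: "finite B" "B \<noteq> {}" "N \<le> free_bits R B" using Fp that by auto
    have "2 powr (- \<delta> * real (free_bits R B)) \<le> \<epsilon>"
      unfolding \<epsilon>_def using B dl by (intro powr_mono) auto
    moreover have "0 < mu U R B" "mu U R B \<le> 1" using mu_bounds[OF E fc B(1,2)] by auto
    ultimately have "xw U R \<delta> B \<le> \<epsilon> * 1" unfolding xw_def
      by (intro mult_mono) (auto simp: \<epsilon>_def)
    then show ?thesis using e1 \<open>0 < mu U R B\<close> unfolding \<epsilon>_def xw_def by simp
  qed
  have sumNb: "(\<Sum>B\<in>Nb. xw U R \<delta> B) \<le> \<epsilon> * f"
    unfolding Nb_def \<epsilon>_def f_def by (rule NS[OF U E fc Fin Fp dl A(1)])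
  have "2 powr (- \<delta> * f) = exp (- \<delta> * f * ln 2)" by (simp add: powr_def)
  also have "\<dots> \<le> exp (- 2 * (\<epsilon> * f))"
  proof -
    have "2 * \<epsilon> * f \<le> \<delta> * ln 2 * f" using e2 f0 unfolding \<epsilon>_def by (intro mult_right_mono) auto
    then show ?thesis by (simp add: mult_ac)
  qed
  also have "\<dots> \<le> exp (- 2 * (\<Sum>B\<in>Nb. xw U R \<delta> B))" using sumNb by simp
  also have "\<dots> \<le> (\<Prod>B\<in>Nb. 1 - xw U R \<delta> B)"
    by (rule prod_exp) (use Fin xw_b in \<open>auto simp: Nb_def\<close>)
  finally have "2 powr (- \<delta> * f) \<le> (\<Prod>B\<in>Nb. 1 - xw U R \<delta> B)" .
  then have "2 powr (- \<delta> * f) * xw U R \<delta> A \<le> (\<Prod>B\<in>Nb. 1 - xw U R \<delta> B) * xw U R \<delta> A"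
    using xw_b[OF AF] by (intro mult_right_mono) auto
  then show ?thesis using PB2 unfolding Nb_def by (simp add: mult.commute)
qed


theorem theorem3:
  fixes R :: "nat \<Rightarrow> nat \<Rightarrow> bool" and \<gamma> :: real and U :: machine
  assumes "optimal_prefix_machine U"
    and "equivp R"
    and "\<forall>x. finite (eq_class R x)"
    and "decidable_rel R"
    and "\<exists>g. computable1 g \<and> (\<forall>x. g x = set_encode (eq_class R x))"
    and "0 < \<gamma>" and "\<gamma> < 1"
  shows "\<exists>\<omega> :: nat \<Rightarrow> bool. \<exists>N :: nat. follows R \<omega> \<and>
    (\<forall>A. finite A \<and> free_bits R A \<ge> N \<longrightarrow>
       (\<exists>t\<in>A. real (KC U (bl_to_nat (restrict_seq \<omega> A)) t)
              \<ge> \<gamma> * real (free_bits R A) - real (KC U (set_encode A) t)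
                 - log 2 (real (class_size R t))))"
proof -
  note U = assms(1) and E = assms(2) and fc = assms(3)
  define \<delta> where "\<delta> = (1 - \<gamma>) / 2"
  have dl: "\<delta> > 0" unfolding \<delta>_def using assms(7) by simp
  have g: "\<gamma> = 1 - 2 * \<delta>" unfolding \<delta>_def by (simp add: field_simps)
  have ln2: "ln (2::real) > 0" by simp
  define \<eta> where "\<eta> = min (1/2) (\<delta> * ln 2 / 2)"
  have \<eta>pos: "\<eta> > 0" unfolding \<eta>_def using dl ln2 by simp
  define N :: nat where "N = nat \<lceil>1 / (\<delta> * ln 2 * \<eta>)\<rceil> + 1"
  have N1: "N \<ge> 1" unfolding N_def by simp
  have Nge: "real N \<ge> 1 / (\<delta> * ln 2 * \<eta>)"
  proof -
    have "1 / (\<delta> * ln 2 * \<eta>) \<le> real (nat \<lceil>1 / (\<delta> * ln 2 * \<eta>)\<rceil>)" by (rule real_nat_ceiling_ge)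
    then show ?thesis unfolding N_def by simp
  qed
  define \<epsilon> where "\<epsilon> = 2 powr (- \<delta> * real N)"
  have \<epsilon>\<eta>: "\<epsilon> \<le> \<eta>"
  proof -
    define X where "X = 2 powr (\<delta> * real N)"
    have X: "X = exp (\<delta> * real N * ln 2)" unfolding X_def by (simp add: powr_def)
    have "1 + \<delta> * real N * ln 2 \<le> X" unfolding X by (rule exp_ge_add_one_self)
    moreover have "1 / \<eta> \<le> \<delta> * real N * ln 2"
    proof -
      have "1 / (\<delta> * ln 2 * \<eta>) * (\<delta> * ln 2) \<le> real N * (\<delta> * ln 2)"
        using Nge dl ln2 by (intro mult_right_mono) auto
      moreover have "1 / (\<delta> * ln 2 * \<eta>) * (\<delta> * ln 2) = 1 / \<eta>" using dl ln2 \<eta>pos by simp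
      ultimately show ?thesis by (simp add: mult_ac)
    qed
    ultimately have h: "1 / \<eta> \<le> X" by linarith
    have Xpos: "X > 0" unfolding X_def by simp
    have "\<epsilon> = 1 / X" unfolding \<epsilon>_def X_def by (simp add: powr_minus inverse_eq_divide)
    also have "\<dots> \<le> \<eta>"
      using h Xpos \<eta>pos by (simp add: divide_le_eq mult.commute)
    finally show ?thesis .
  qed
  have e1: "2 powr (- \<delta> * real N) \<le> 1/2" using \<epsilon>\<eta> unfolding \<epsilon>_def \<eta>_def by simp
  have e2: "2 * 2 powr (- \<delta> * real N) \<le> \<delta> * ln 2" using \<epsilon>\<eta> unfolding \<epsilon>_def \<eta>_def by simp
  define Fk where "Fk k = {A \<in> set_decode ` {..<k}. N \<le> free_bits R A}" for k
  define Wk where "Wk k = (\<Union>A\<in>Fk k. rep R ` A)" for k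
  define Ck where "Ck k = (\<Inter>A\<in>Fk k. - Bad U R \<gamma> A)" for k
  have fb0: "free_bits R {} = 0" using free_bits_card[OF E, of "{}"] by simp
  have Fp: "\<forall>B\<in>Fk k. finite B \<and> N \<le> free_bits R B \<and> B \<noteq> {}" for k
  proof
    fix B assume "B \<in> Fk k"
    then have "finite B" "N \<le> free_bits R B" unfolding Fk_def by auto
    moreover have "B \<noteq> {}" using \<open>N \<le> free_bits R B\<close> N1 fb0 by auto
    ultimately show "finite B \<and> N \<le> free_bits R B \<and> B \<noteq> {}" by simp
  qed
  have fF: "finite (Fk k)" for k unfolding Fk_def by simp
  have fW: "finite (Wk k)" for k unfolding Wk_def using fF Fp by auto
  have VW: "\<forall>B\<in>Fk k. rep R ` B \<subseteq> Wk k" for k unfolding Wk_def by auto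
  have ne: "Ck k \<noteq> {}" for k
  proof -
    have "Prob (Wk k) (\<Inter>i\<in>Fk k. - Bad U R \<gamma> i) \<ge> (\<Prod>i\<in>Fk k. 1 - xw U R \<delta> i)"
    proof (rule lll[OF fW fF])
      show "\<forall>i\<in>Fk k. rep R ` i \<subseteq> Wk k" by (rule VW)
      show "\<forall>i\<in>Fk k. dep (rep R ` i) (Bad U R \<gamma> i)"
      proof
        fix i assume "i \<in> Fk k"
        then have "finite i" using Fp by blast
        then show "dep (rep R ` i) (Bad U R \<gamma> i)" by (rule dep_Bad)
      qed
      show "\<forall>i\<in>Fk k. 0 \<le> xw U R \<delta> i \<and> xw U R \<delta> i < 1"
      proof
        fix i assume i: "i \<in> Fk k"
        have B: "finite i" "i \<noteq> {}" "N \<le> free_bits R i" using Fp i by auto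
        have "2 powr (- \<delta> * real (free_bits R i)) \<le> 2 powr (- \<delta> * real N)"
          using B dl by (intro powr_mono) auto
        moreover have "0 < mu U R i" "mu U R i \<le> 1" using mu_bounds[OF E fc B(1,2)] by auto
        ultimately have "xw U R \<delta> i \<le> 2 powr (- \<delta> * real N) * 1" unfolding xw_def
          by (intro mult_mono) auto
        then show "0 \<le> xw U R \<delta> i \<and> xw U R \<delta> i < 1"
          using e1 \<open>0 < mu U R i\<close> unfolding xw_def by simp
      qed
      show "\<forall>i\<in>Fk k. Prob (Wk k) (Bad U R \<gamma> i) \<le> xw U R \<delta> i *
              (\<Prod>j\<in>{j\<in>Fk k. j \<noteq> i \<and> rep R ` j \<inter> rep R ` i \<noteq> {}}. 1 - xw U R \<delta> j)"
      proof
        fix i assume i: "i \<in> Fk k"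
        show "Prob (Wk k) (Bad U R \<gamma> i) \<le> xw U R \<delta> i *
              (\<Prod>j\<in>{j\<in>Fk k. j \<noteq> i \<and> rep R ` j \<inter> rep R ` i \<noteq> {}}. 1 - xw U R \<delta> j)"
          by (rule LLLcond[OF U E fc fF Fp fW VW i dl g e1 e2])
      qed
    qed
    moreover have "(\<Prod>i\<in>Fk k. 1 - xw U R \<delta> i) > 0"
    proof (rule prod_pos)
      fix i assume i: "i \<in> Fk k"
      have B: "finite i" "i \<noteq> {}" "N \<le> free_bits R i" using Fp i by auto
      have "2 powr (- \<delta> * real (free_bits R i)) \<le> 2 powr (- \<delta> * real N)"
        using B dl by (intro powr_mono) auto
      moreover have "0 < mu U R i" "mu U R i \<le> 1" using mu_bounds[OF E fc B(1,2)] by auto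
      ultimately have "xw U R \<delta> i \<le> 2 powr (- \<delta> * real N) * 1" unfolding xw_def
        by (intro mult_mono) auto
      then show "0 < 1 - xw U R \<delta> i" using e1 by simp
    qed
    ultimately have "Prob (Wk k) (Ck k) > 0" unfolding Ck_def by linarith
    show "Ck k \<noteq> {}"
    proof
      assume "Ck k = {}"
      then have "Prob (Wk k) (Ck k) = 0" by simp
      then show False using \<open>Prob (Wk k) (Ck k) > 0\<close> by simp
    qed
  qed
  have mono: "Ck k' \<subseteq> Ck k" if "k \<le> k'" for k k'
  proof -
    have "Fk k \<subseteq> Fk k'" unfolding Fk_def using that by auto
    then show ?thesis unfolding Ck_def by blast
  qed
  have fd: "\<exists>M. finite M \<and> dep M (Ck k)" for k
  proof (intro exI conjI)
    show "finite (Wk k)" by (rule fW)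
    show "dep (Wk k) (Ck k)" unfolding Ck_def
    proof (rule dep_INT, rule dep_compl)
      fix A assume "A \<in> Fk k"
      then have "finite A" "rep R ` A \<subseteq> Wk k" using Fp VW by auto
      then show "dep (Wk k) (Bad U R \<gamma> A)" using dep_Bad[of A R U \<gamma>] dep_mono by blast
    qed
  qed
  obtain c where c: "\<forall>k. c \<in> Ck k" using compact_nested[of Ck, OF ne mono fd] by blast
  define \<omega> where "\<omega> = omg R c"
  have fol: "follows R \<omega>"
    unfolding follows_def
  proof (intro allI impI)
    fix i j assume "R i j"
    then have "rep R i = rep R j" using rep_iff[OF E] by simp
    then show "\<omega> i = \<omega> j" unfolding \<omega>_def omg_def by simp
  qed
  have main: "\<exists>t\<in>A. real (KC U (bl_to_nat (restrict_seq \<omega> A)) t)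
              \<ge> \<gamma> * real (free_bits R A) - real (KC U (set_encode A) t)
                 - log 2 (real (class_size R t))"
    if A: "finite A" "free_bits R A \<ge> N" for A
  proof -
    have "A \<in> Fk (Suc (set_encode A))" unfolding Fk_def using A
      by (auto intro!: image_eqI[where x="set_encode A"])
    moreover have "c \<in> Ck (Suc (set_encode A))" using c by blast
    ultimately have "c \<notin> Bad U R \<gamma> A" unfolding Ck_def by simp
    then have "\<not> (\<forall>t\<in>A. real (KC U (bl_to_nat (restrict_seq (omg R c) A)) t)
       < \<gamma> * real (free_bits R A) - real (KC U (set_encode A) t) - log 2 (real (class_size R t)))"
      unfolding Bad_def by simp
    then obtain t where t: "t \<in> A" "\<not> (real (KC U (bl_to_nat (restrict_seq (omg R c) A)) t)
       < \<gamma> * real (free_bits R A) - real (KC U (set_encode A) t) - log 2 (real (class_size R t)))"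
      by blast
    show ?thesis
      by (rule bexI[OF _ t(1)]) (use t(2) in \<open>simp add: not_less \<omega>_def\<close>)
  qed
  show ?thesis using fol main by blast
qed


end
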